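(* Let $a,b,c$ be real numbers such that either $a,b,c\ge0$ and $0<a+b\le c$, or $a,b\ge 0$, $c\le 0$ and $a+b+c>0$. Then for every real $r\neq 0$, $$\frac{(e^{2ar}-1)(e^{2br}-1)(e^{cr}+1)^2}{(e^{(a+b+c)r}-1)^2}\ \ge\ \frac{16ab}{(a+b+c)^2}.$$ *)

theory Defs
  imports Complex_Main
begin

end

theory Submission
  imports Defs
begin

lemma sinh_le_x_cosh:
  fixes x :: real assumes "0 \<le> x" shows "sinh x \<le> x * cosh x"
proof -
  have "(\<lambda>y. y * cosh y - sinh y) 0 \<le> (\<lambda>y. y * cosh y - sinh y) x"
  proof (rule deriv_nonneg_imp_mono[where g = "\<lambda>y. y * cosh y - sinh y" and g' = "\<lambda>y. y * sinh y"])
    fix y :: real assume "y \<in> {0..x}"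
    show "((\<lambda>y. y * cosh y - sinh y) has_real_derivative y * sinh y) (at y)"
      by (auto intro!: derivative_eq_intros)
    show "0 \<le> y * sinh y" using \<open>y \<in> {0..x}\<close> by auto
  qed (use assms in auto)
  then show ?thesis by simp
qed

lemma sinh_div_mono:
  fixes h m :: real assumes "0 \<le> h" "h \<le> m" shows "m * sinh h \<le> h * sinh m"
proof (cases "h = 0")
  case True then show ?thesis by simp
next
  case False
  with assms have hp: "0 < h" by auto
  have "(\<lambda>y. sinh y / y) h \<le> (\<lambda>y. sinh y / y) m"
  proof (rule deriv_nonneg_imp_mono[where g = "\<lambda>y. sinh y / y" and g' = "\<lambda>y. (y * cosh y - sinh y) / y^2"])
    fix y :: real assume y: "y \<in> {h..m}"
    then have "y \<noteq> 0" using hp by auto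
    then show "((\<lambda>y. sinh y / y) has_real_derivative (y * cosh y - sinh y) / y^2) (at y)"
      by (auto intro!: derivative_eq_intros simp: power2_eq_square field_simps)
    show "0 \<le> (y * cosh y - sinh y) / y^2" using y hp sinh_le_x_cosh[of y] by auto
  qed (use assms in auto)
  then show ?thesis using hp assms by (simp add: field_simps)
qed

lemma step1:
  fixes a b r :: real assumes "a \<ge> 0" "b \<ge> 0" "r > 0"
  shows "4*a*b * sinh ((a+b)*r/2)^2 \<le> sinh (a*r) * sinh (b*r) * (a+b)^2"
proof -
  define m where "m = (a+b)*r/2"
  define h where "h = (a-b)*r/2"
  have ar: "a*r = m + h" and br: "b*r = m - h" unfolding m_def h_def by (simp_all add: field_simps)
  have prod: "sinh (a*r) * sinh (b*r) = sinh m ^2 - sinh h ^2"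
    unfolding ar br sinh_add sinh_diff
    by (simp add: algebra_simps power2_eq_square[symmetric] cosh_square_eq)
  have hm: "\<bar>h\<bar> \<le> m" unfolding h_def m_def using assms
    by (auto simp: abs_mult abs_if field_simps)
  have M: "m * sinh \<bar>h\<bar> \<le> \<bar>h\<bar> * sinh m" using sinh_div_mono[OF _ hm] by simp
  have "0 \<le> m * sinh \<bar>h\<bar>" using hm by auto
  then have "(m * sinh \<bar>h\<bar>)^2 \<le> (\<bar>h\<bar> * sinh m)^2" using power_mono[OF M] by blast
  then have sq: "m^2 * sinh h^2 \<le> h^2 * sinh m^2"
    by (simp add: power_mult_distrib power2_abs)
  have "m^2 = (a+b)^2 * r^2/4" "h^2 = (a-b)^2*r^2/4" unfolding m_def h_def by (simp_all add: power2_eq_square)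
  with sq have "(a+b)^2 * r^2 * sinh h^2 \<le> (a-b)^2 * r^2 * sinh m^2" by simp
  then have "((a+b)^2 * sinh h^2) * r^2 \<le> ((a-b)^2 * sinh m^2) * r^2"
    by (simp add: algebra_simps)
  then have "(a+b)^2 * sinh h^2 \<le> (a-b)^2 * sinh m^2" using assms(3)
    using mult_le_cancel_right_pos[of "r^2"] by simp
  then show ?thesis unfolding prod m_def[symmetric]
    by (simp add: power2_eq_square algebra_simps)
qed

lemma step2:
  fixes a b c r :: real
  assumes hyp: "(a \<ge> 0 \<and> b \<ge> 0 \<and> c \<ge> 0 \<and> 0 < a + b \<and> a + b \<le> c)
             \<or> (a \<ge> 0 \<and> b \<ge> 0 \<and> c \<le> 0 \<and> a + b + c > 0)"
    and r: "r > 0"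
  shows "(a+b) * sinh ((a+b+c)*r/2) \<le> (a+b+c) * sinh ((a+b)*r/2) * cosh (c*r/2)"
  using hyp
proof
  assume h: "a \<ge> 0 \<and> b \<ge> 0 \<and> c \<ge> 0 \<and> 0 < a + b \<and> a + b \<le> c"
  define m where "m = (a+b)*r/2"
  define C where "C = c*r/2"
  have "(a+b)*r \<le> c*r" using h r by (intro mult_right_mono) auto
  then have mC: "0 \<le> m" "m \<le> C" unfolding m_def C_def using h r by (simp_all add: divide_right_mono)
  have M: "(C+m) * sinh (C-m) \<le> (C-m) * sinh (C+m)"
    using sinh_div_mono[of "C-m" "C+m"] mC by auto
  have e1: "(a+b+c)*r/2 = m + C" unfolding m_def C_def by (simp add: field_simps)
  have "(a+b) * sinh (m+C) * r \<le> (a+b+c) * sinh m * cosh C * r"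
  proof -
    have q: "(a+b)*r = 2*m" "(a+b+c)*r = 2*(m+C)" unfolding m_def C_def by (simp_all add: field_simps)
    have "(a+b) * sinh (m+C) * r = ((a+b)*r) * sinh (m+C)" by (simp add: algebra_simps)
    also have "\<dots> = 2*m * sinh (m+C)" using q by simp
    also have "\<dots> \<le> 2*(m+C) * sinh m * cosh C"
      using M unfolding sinh_add sinh_diff by (simp add: algebra_simps)
    also have "\<dots> = ((a+b+c)*r) * sinh m * cosh C" using q by simp
    finally show ?thesis by (simp add: algebra_simps)
  qed
  then show ?thesis using r unfolding e1 m_def C_def by simp
next
  assume h: "a \<ge> 0 \<and> b \<ge> 0 \<and> c \<le> 0 \<and> a + b + c > 0"
  define m where "m = (a+b)*r/2"
  define C where "C = c*r/2"
  have "0 \<le> (a+b+c)*r" using h r by simp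
  moreover have "c*r \<le> 0" using h r by (simp add: mult_nonpos_nonneg)
  ultimately have mC: "0 \<le> m+C" "m + C \<le> m" unfolding m_def C_def
    by (simp_all add: field_simps)
  have M: "m * sinh (m+C) \<le> (m+C) * sinh m"
    using sinh_div_mono[OF mC] by auto
  have e1: "(a+b+c)*r/2 = m + C" unfolding m_def C_def by (simp add: field_simps)
  have "(a+b) * sinh (m+C) * r \<le> (a+b+c) * sinh m * r"
  proof -
    have q: "(a+b)*r = 2*m" "(a+b+c)*r = 2*(m+C)" unfolding m_def C_def by (simp_all add: field_simps)
    have "(a+b) * sinh (m+C) * r = ((a+b)*r) * sinh (m+C)" by (simp add: algebra_simps)
    also have "\<dots> = 2*m * sinh (m+C)" using q by simp
    also have "\<dots> \<le> 2*(m+C) * sinh m" using M by (simp add: algebra_simps)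
    also have "\<dots> = ((a+b+c)*r) * sinh m" using q by simp
    finally show ?thesis by (simp add: algebra_simps)
  qed
  then have "(a+b) * sinh (m+C) \<le> (a+b+c) * sinh m" using r by simp
  also have "\<dots> \<le> (a+b+c) * sinh m * cosh C"
  proof -
    have "0 \<le> (a+b+c) * sinh m" using h mC by simp
    then show ?thesis using cosh_real_ge_1[of C] mult_left_mono[of 1 "cosh C"] by simp
  qed
  finally show ?thesis unfolding e1 m_def C_def by simp
qed

lemma key_pos:
  fixes a b c r :: real
  assumes hyp: "(a \<ge> 0 \<and> b \<ge> 0 \<and> c \<ge> 0 \<and> 0 < a + b \<and> a + b \<le> c)
             \<or> (a \<ge> 0 \<and> b \<ge> 0 \<and> c \<le> 0 \<and> a + b + c > 0)"
    and r: "r > 0"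
  shows "4*a*b * sinh ((a+b+c)*r/2)^2 \<le> sinh (a*r) * sinh (b*r) * cosh (c*r/2)^2 * (a+b+c)^2"
proof -
  have ab: "a \<ge> 0" "b \<ge> 0" "a + b > 0" "a+b+c > 0" using hyp by auto
  define P where "P = sinh (a*r) * sinh (b*r)"
  define Sm where "Sm = sinh ((a+b)*r/2)"
  define Ss where "Ss = sinh ((a+b+c)*r/2)"
  define K where "K = cosh (c*r/2)"
  define p where "p = a+b"
  define s where "s = a+b+c"
  have s1: "4*a*b*Sm^2 \<le> P * p^2" using step1[OF ab(1,2) r] unfolding P_def Sm_def p_def .
  have s2: "p * Ss \<le> s * Sm * K" using step2[OF hyp r] unfolding Ss_def Sm_def K_def p_def s_def .
  have "0 \<le> p * Ss" unfolding p_def Ss_def using ab r by simp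
  then have "(p*Ss)^2 \<le> (s*Sm*K)^2" using power_mono[OF s2] by blast
  then have s3: "p^2 * Ss^2 \<le> s^2 * K^2 * Sm^2" by (simp add: power_mult_distrib algebra_simps)
  have ab4: "0 \<le> 4*a*b" using ab by simp
  have "(4*a*b*Ss^2) * p^2 = 4*a*b * (p^2 * Ss^2)" by (simp add: algebra_simps)
  also have "\<dots> \<le> 4*a*b * (s^2 * K^2 * Sm^2)" using s3 ab4 by (rule mult_left_mono)
  also have "\<dots> = s^2 * K^2 * (4*a*b*Sm^2)" by (simp add: algebra_simps)
  also have "\<dots> \<le> s^2 * K^2 * (P * p^2)" using s1 by (intro mult_left_mono) auto
  also have "\<dots> = (P * K^2 * s^2) * p^2" by (simp add: algebra_simps)
  finally have "(4*a*b*Ss^2) * p^2 \<le> (P * K^2 * s^2) * p^2" .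
  then have "4*a*b*Ss^2 \<le> P * K^2 * s^2" using ab(3) unfolding p_def
    using mult_le_cancel_right_pos[of "(a+b)^2"] by simp
  then show ?thesis unfolding P_def K_def s_def Ss_def .
qed

lemma key:
  fixes a b c r :: real
  assumes hyp: "(a \<ge> 0 \<and> b \<ge> 0 \<and> c \<ge> 0 \<and> 0 < a + b \<and> a + b \<le> c)
             \<or> (a \<ge> 0 \<and> b \<ge> 0 \<and> c \<le> 0 \<and> a + b + c > 0)"
    and r: "r \<noteq> 0"
  shows "4*a*b * sinh ((a+b+c)*r/2)^2 \<le> sinh (a*r) * sinh (b*r) * cosh (c*r/2)^2 * (a+b+c)^2"
proof (cases "r > 0")
  case True then show ?thesis using key_pos[OF hyp] by blast
next
  case False
  then have "-r > 0" using r by simp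
  from key_pos[OF hyp this] show ?thesis by simp
qed

lemma exp_m1: "exp (2*x) - 1 = 2 * exp x * sinh (x::real)"
  by (simp add: sinh_field_def exp_minus field_simps exp_add[symmetric])

lemma exp_p1: "exp (2*x) + 1 = 2 * exp x * cosh (x::real)"
  by (simp add: cosh_field_def exp_minus field_simps exp_add[symmetric])

theorem lemma4p1:
  fixes a b c r :: real
  assumes hyp: "(a \<ge> 0 \<and> b \<ge> 0 \<and> c \<ge> 0 \<and> 0 < a + b \<and> a + b \<le> c)
             \<or> (a \<ge> 0 \<and> b \<ge> 0 \<and> c \<le> 0 \<and> a + b + c > 0)"
    and r: "r \<noteq> 0"
  shows "(exp (2*a*r) - 1) * (exp (2*b*r) - 1) * (exp (c*r) + 1)^2 / (exp ((a+b+c)*r) - 1)^2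
           \<ge> 16*a*b / (a+b+c)^2"
proof -
  have s: "a+b+c > 0" using hyp by auto
  define S where "S = sinh ((a+b+c)*r/2)"
  have S0: "S \<noteq> 0" unfolding S_def using s r by simp
  have e1: "exp (2*a*r) - 1 = 2 * exp (a*r) * sinh (a*r)" using exp_m1[of "a*r"] by (simp add: mult.assoc)
  have e2: "exp (2*b*r) - 1 = 2 * exp (b*r) * sinh (b*r)" using exp_m1[of "b*r"] by (simp add: mult.assoc)
  have e3: "exp (c*r) + 1 = 2 * exp (c*r/2) * cosh (c*r/2)" using exp_p1[of "c*r/2"] by simp
  have e4: "exp ((a+b+c)*r) - 1 = 2 * exp ((a+b+c)*r/2) * S" using exp_m1[of "(a+b+c)*r/2"] unfolding S_def by simp
  have ee: "exp ((a+b+c)*r/2)^2 = exp (a*r) * exp (b*r) * exp (c*r/2)^2"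
    by (simp add: power2_eq_square exp_add[symmetric] field_simps)
  have L: "(exp (2*a*r) - 1) * (exp (2*b*r) - 1) * (exp (c*r) + 1)^2 / (exp ((a+b+c)*r) - 1)^2
     = 4 * (sinh (a*r) * sinh (b*r) * cosh (c*r/2)^2) / S^2"
  proof -
    have d: "(2 * exp ((a+b+c)*r/2) * S)^2 = 4 * (exp (a*r) * exp (b*r) * exp (c*r/2)^2) * S^2"
      by (simp add: power_mult_distrib ee)
    have n: "(2 * exp (a*r) * sinh (a*r)) * (2 * exp (b*r) * sinh (b*r)) * (2 * exp (c*r/2) * cosh (c*r/2))^2
      = 4 * (exp (a*r) * exp (b*r) * exp (c*r/2)^2) * (4 * (sinh (a*r) * sinh (b*r) * cosh (c*r/2)^2))"
      by (simp add: power_mult_distrib algebra_simps)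
    have pos: "exp (a*r) * exp (b*r) * exp (c*r/2)^2 \<noteq> 0" by simp
    show ?thesis unfolding e1 e2 e3 e4 d n using S0 pos by simp
  qed
  have k: "4*a*b * S^2 \<le> sinh (a*r) * sinh (b*r) * cosh (c*r/2)^2 * (a+b+c)^2"
    using key[OF hyp r] unfolding S_def .
  show ?thesis unfolding L using S0 s k
    by (simp add: divide_simps algebra_simps)
qed

end
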